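(* Let $\mathcal{G}=\{(P,\lambda)\in\mathsf{Sp}(n-1,\omega)\times\mathbb{R}_+:\dim\ker(P-\lambda\,\mathrm{Id})\leq1\}$ and $\mathcal{G}_1=\{(P,\lambda)\in\mathsf{Sp}(n-1,\omega)\times\mathbb{R}_+:\dim\ker(P-\lambda\,\mathrm{Id})=1\}$. Then the map $\chi\colon\mathcal{G}\to\mathbb{R}$, $\chi(P,\mu)=\det(P-\mu\,\mathrm{Id})$, is a submersion in a neighbourhood of $\mathcal{G}_1$.
   Context: $\omega$ is the standard symplectic form on $\mathbb{R}^{2(n-1)}$, $\mathsf{Sp}(n-1,\omega)$ the corresponding real symplectic group, $\mathbb{R}_+=(0,\infty)$. $\mathcal{G}$ is an open subset of the manifold $\mathsf{Sp}(n-1,\omega)\times\mathbb{R}_+$. *)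

theory Defs
  imports "HOL-Analysis.Analysis"
begin

text \<open>Phase space R^(2(n-1)) is modelled as real^('k + 'k) with CARD('k) = n - 1:
  coordinates Inl i are the q_i, coordinates Inr i the p_i.\<close>

type_synonym 'k mat = "real ^ ('k + 'k) ^ ('k + 'k)"

definition J_std :: "('k::finite) mat" where
  "J_std = (\<chi> a b. case (a, b) of
              (Inl i, Inr j) \<Rightarrow> (if i = j then 1 else 0)
            | (Inr i, Inl j) \<Rightarrow> (if i = j then -1 else 0)
            | _ \<Rightarrow> 0)"

definition omega :: "real ^ ('k::finite + 'k) \<Rightarrow> real ^ ('k + 'k) \<Rightarrow> real" where
  "omega x y = x \<bullet> (J_std *v y)"

definition Sp :: "('k::finite) mat set" where
  "Sp = {P. \<forall>x y. omega (P *v x) (P *v y) = omega x y}"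

definition dim_ker :: "('k::finite) mat \<Rightarrow> real \<Rightarrow> nat" where
  "dim_ker P l = dim {x. (P - l *\<^sub>R mat 1) *v x = 0}"

definition GG :: "(('k::finite) mat \<times> real) set" where
  "GG = {(P, l). P \<in> Sp \<and> l > 0 \<and> dim_ker P l \<le> 1}"

definition GG1 :: "(('k::finite) mat \<times> real) set" where
  "GG1 = {(P, l). P \<in> Sp \<and> l > 0 \<and> dim_ker P l = 1}"

definition chi :: "('k::finite) mat \<times> real \<Rightarrow> real" where
  "chi = (\<lambda>(P, m). det (P - m *\<^sub>R mat 1))"

text \<open>Tangent space of a subset S of a Euclidean space at x: velocities at 0 of curves
  in S through x (for an embedded submanifold, this is its tangent space).\<close>
definition tangent_space :: "'a::euclidean_space set \<Rightarrow> 'a \<Rightarrow> 'a set" where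
  "tangent_space S x = {v. \<exists>\<gamma>. \<gamma> 0 = x \<and> (\<forall>t. \<gamma> t \<in> S) \<and> (\<gamma> has_vector_derivative v) (at 0)}"

definition submersion_at :: "'a::euclidean_space set \<Rightarrow> ('a \<Rightarrow> 'b::euclidean_space) \<Rightarrow> 'a \<Rightarrow> bool" where
  "submersion_at S f x \<longleftrightarrow> x \<in> S \<and>
     (\<exists>f'. (f has_derivative f') (at x) \<and> f' ` tangent_space S x = UNIV)"

end

theory Submission
  imports Defs
begin

lemma sum_UNIV_Plus:
  "sum f (UNIV :: ('a::finite + 'b::finite) set) = (\<Sum>i\<in>UNIV. f (Inl i)) + (\<Sum>i\<in>UNIV. f (Inr i))"
  by (simp add: UNIV_Plus_UNIV[symmetric] sum.Plus comp_def del: UNIV_Plus_UNIV)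

lemma ifmult: "(if P then (c::real) else 0) * a = (if P then c * a else 0)" by simp

lemma J_Inl: "(J_std *v y) $ Inl i = y $ Inr i"
  unfolding J_std_def matrix_vector_mult_def
  by (simp add: sum_UNIV_Plus if_distrib[of "\<lambda>f. f _"] ifmult cong: if_cong)

lemma J_Inr: "(J_std *v y) $ Inr i = - y $ Inl i"
  unfolding J_std_def matrix_vector_mult_def
  by (simp add: sum_UNIV_Plus if_distrib[of "\<lambda>f. f _"] ifmult cong: if_cong)

lemma J_J: "J_std *v (J_std *v y) = - (y :: real ^ ('k::finite + 'k))"
  unfolding vec_eq_iff
proof
  fix a :: "'k + 'k" show "(J_std *v (J_std *v y)) $ a = (- y) $ a"
    by (cases a) (simp_all add: J_Inl J_Inr)
qed

lemma omega_expl: "omega x y = (\<Sum>i\<in>UNIV. x $ Inl i * y $ Inr i - x $ Inr i * y $ Inl i)"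
  unfolding omega_def inner_vec_def
  by (simp add: sum_UNIV_Plus J_Inl J_Inr sum_subtractf sum_negf)

lemma omega_add_left: "omega (x + y) z = omega x z + omega y z"
  by (simp add: omega_expl sum.distrib[symmetric] algebra_simps)
lemma omega_add_right: "omega z (x + y) = omega z x + omega z y"
  by (simp add: omega_expl sum.distrib[symmetric] algebra_simps)
lemma omega_scale_left: "omega (c *\<^sub>R x) z = c * omega x z"
  by (simp add: omega_expl sum_distrib_left algebra_simps)
lemma omega_scale_right: "omega z (c *\<^sub>R x) = c * omega z x"
  by (simp add: omega_expl sum_distrib_left algebra_simps)
lemma omega_antisym: "omega x y = - omega y x"
  by (simp add: omega_expl sum_negf[symmetric] algebra_simps)
lemma omega_self: "omega x x = 0"
  using omega_antisym[of x x] by simp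
lemma omega_nondeg: assumes "\<And>y. omega x y = 0" shows "x = 0"
proof -
  have "omega x (J_std *v x) = - (x \<bullet> x)"
    unfolding omega_def by (simp add: J_J)
  with assms show ?thesis by simp
qed


definition outer :: "real^'n \<Rightarrow> real^'n \<Rightarrow> real^'n^'n" where
  "outer a b = (\<chi> i j. a $ i * b $ j)"

lemma outer_mv: "outer a b *v y = (b \<bullet> y) *\<^sub>R a"
  unfolding outer_def matrix_vector_mult_def vec_eq_iff inner_vec_def
  by (simp add: sum_distrib_left algebra_simps)

lemma mat_outer: "(P::real^'n^'n) ** outer a b = outer (P *v a) b"
  unfolding outer_def matrix_matrix_mult_def matrix_vector_mult_def vec_eq_iff
  by (simp add: sum_distrib_left algebra_simps)


definition Tr :: "real^('k::finite+'k) \<Rightarrow> real \<Rightarrow> 'k mat" where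
  "Tr w t = mat 1 + t *\<^sub>R outer w (w v* J_std)"

lemma Tr_mv: "Tr w t *v y = y + (t * omega w y) *\<^sub>R w"
  unfolding Tr_def by (simp add: matrix_vector_mult_add_rdistrib outer_mv dot_lmul_matrix omega_def
     scaleR_matrix_vector_assoc[symmetric])


lemma Tr_Sp: "Tr w t \<in> Sp"
  unfolding Sp_def
proof (intro CollectI allI)
  fix x y
  show "omega (Tr w t *v x) (Tr w t *v y) = omega x y"
    unfolding Tr_mv
    using omega_antisym[of x w] omega_self[of w]
    by (simp add: omega_add_left omega_add_right omega_scale_left omega_scale_right algebra_simps)
qed

lemma Sp_mult: "P \<in> Sp \<Longrightarrow> Q \<in> Sp \<Longrightarrow> P ** Q \<in> Sp"
  unfolding Sp_def by (simp add: matrix_vector_mul_assoc[symmetric])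


lemma Sp_inj: assumes "P \<in> Sp" shows "inj ((*v) P)"
proof (rule linear_inj_on_iff_eq_0[THEN iffD2])
  show "linear ((*v) P)" by (rule matrix_vector_mul_linear)
  show "\<forall>x\<in>UNIV. P *v x = 0 \<longrightarrow> x = 0"
  proof (intro ballI impI)
    fix x assume "P *v x = 0"
    have "omega x y = 0" for y
    proof -
      have "omega x y = omega (P *v x) (P *v y)" using assms unfolding Sp_def by simp
      also have "\<dots> = 0" using \<open>P *v x = 0\<close> by (simp add: omega_expl)
      finally show ?thesis .
    qed
    then show "x = 0" by (rule omega_nondeg)
  qed
qed auto

lemma Sp_surj: assumes "P \<in> Sp" shows "surj ((*v) P)"
  using Sp_inj[OF assms] eucl.linear_injective_imp_surjective matrix_vector_mul_linear by blast

lemma det_rows_add_multiple: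
  fixes B :: "real^'n::finite^'n"
  assumes "finite S" "k \<notin> S"
  shows "det (\<chi> i. if i \<in> S then row i B + c i *s row k B else row i B) = det B"
  using assms
proof (induction S rule: finite_induct)
  case empty
  then show ?case by (simp add: row_def)
next
  case (insert j S)
  let ?M = "(\<chi> i. if i \<in> S then row i B + c i *s row k B else row i B) :: real^'n^'n"
  have jk: "j \<noteq> k" using insert by auto
  have r1: "row j ?M = row j B" using insert by (simp add: row_def)
  have r2: "row k ?M = row k B" using insert by (simp add: row_def)
  have eq: "(\<chi> i. if i \<in> insert j S then row i B + c i *s row k B else row i B)
      = (\<chi> i. if i = j then row j ?M + c j *s row k ?M else row i ?M)"
    unfolding r1 r2 by (rule vec_eq_iff[THEN iffD2]) (auto simp: row_def)
  show ?case unfolding eq det_row_operation[OF jk] using insert by simp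
qed

lemma det_rank_one_sum:
  fixes A :: "real^'n::finite^'n"
  assumes "finite S"
  shows "det (\<chi> i. if i \<in> S then row i A + (t * a$i) *s b else row i A)
     = det A + t * (\<Sum>i\<in>S. a$i * det (\<chi> j. if j = i then b else row j A))"
  using assms
proof (induction S rule: finite_induct)
  case empty
  then show ?case by (simp add: row_def)
next
  case (insert k S)
  let ?M = "(\<chi> i. if i \<in> S then row i A + (t * a$i) *s b else row i A) :: real^'n^'n"
  let ?B = "(\<chi> j. if j = k then b else row j A) :: real^'n^'n"
  have rk: "row k ?M = row k A" using insert by (simp add: row_def)
  have eq: "(\<chi> i. if i \<in> insert k S then row i A + (t * a$i) *s b else row i A)
      = (\<chi> i. if i = k then row k A + (t * a$k) *s b else row i ?M)"
    by (rule vec_eq_iff[THEN iffD2]) (auto simp: row_def)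
  have eq1: "(\<chi> i. if i = k then row k A else row i ?M) = ?M"
    using rk insert by (simp add: vec_eq_iff row_def)
  have eq2: "(\<chi> i. if i = k then b else row i ?M)
      = (\<chi> i. if i \<in> S then row i ?B + (t * a$i) *s row k ?B else row i ?B)"
    using insert by (auto simp: vec_eq_iff row_def)
  have d2: "det (\<chi> i. if i = k then b else row i ?M) = det ?B"
    unfolding eq2 by (rule det_rows_add_multiple) (use insert in auto)
  have "det (\<chi> i. if i \<in> insert k S then row i A + (t * a$i) *s b else row i A)
      = det ?M + (t * a$k) * det ?B"
    unfolding eq det_row_add[of k] det_row_mul[of k] eq1 d2 ..
  also have "\<dots> = det A + t * (\<Sum>i\<in>insert k S. a$i * det (\<chi> j. if j = i then b else row j A))"
    using insert by (simp add: algebra_simps)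
  finally show ?case .
qed

lemma det_rank_one_affine:
  fixes A :: "real^'n::finite^'n"
  shows "det (A + t *\<^sub>R (\<chi> i j. a$i * b$j)) = det A + t * (det (A + (\<chi> i j. a$i * b$j)) - det A)"
proof -
  define D where "D = (\<Sum>i\<in>UNIV. a$i * det ((\<chi> j. if j = i then b else row j A) :: real^'n^'n))"
  have gen: "det (A + s *\<^sub>R (\<chi> i j. a$i * b$j)) = det A + s * D" for s
  proof -
    have "A + s *\<^sub>R (\<chi> i j. a$i * b$j) = (\<chi> i. if i \<in> UNIV then row i A + (s * a$i) *s b else row i A)"
      by (simp add: vec_eq_iff row_def)
    then show ?thesis using det_rank_one_sum[of UNIV A s a b] by (simp add: D_def)
  qed
  show ?thesis using gen[of t] gen[of 1] by simp
qed

lemma entry_has_derivative: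
  "((\<lambda>M::real^'n::finite^'m::finite. M $ i $ j) has_derivative (\<lambda>H. H $ i $ j)) (at A)"
  using bounded_linear.has_derivative[OF bounded_linear_vec_nth[of j],
        OF bounded_linear.has_derivative[OF bounded_linear_vec_nth[of i], OF has_derivative_ident]] .

lemma det_differentiable: "(det :: real^'n::finite^'n \<Rightarrow> real) differentiable (at A)"
  unfolding differentiable_def det_def[abs_def]
  apply (rule exI)
  apply (rule has_derivative_sum)
  apply (rule has_derivative_mult_right)
  apply (rule has_derivative_prod)
  apply (rule entry_has_derivative)
  done


lemma chi_eq: "chi = (\<lambda>z. det (fst z - snd z *\<^sub>R mat 1))"
  unfolding chi_def by (auto simp: fun_eq_iff)

lemma chi_differentiable: "chi differentiable (at (x :: 'k::finite mat \<times> real))"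
proof -
  have "((\<lambda>z::'k::finite mat \<times> real. fst z - snd z *\<^sub>R mat 1) has_derivative (\<lambda>h. fst h - snd h *\<^sub>R mat 1)) (at x)"
    by (auto intro!: derivative_eq_intros)
  then have "(\<lambda>z::'k::finite mat \<times> real. fst z - snd z *\<^sub>R mat 1) differentiable (at x)"
    unfolding differentiable_def by blast
  from differentiable_chain_at[OF this det_differentiable]
  show ?thesis unfolding chi_eq comp_def .
qed

definition gg :: "'k::finite mat \<Rightarrow> real \<Rightarrow> real^('k+'k) \<Rightarrow> real" where
  "gg P m w = det (P - m *\<^sub>R mat 1 + outer (P *v w) (w v* J_std)) - det (P - m *\<^sub>R mat 1)"

lemma outer_scale: "outer (c *\<^sub>R a) b = c *\<^sub>R outer a b"
  unfolding outer_def by (simp add: vec_eq_iff)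

lemma scale_mv: "((t::real) *\<^sub>R (P::real^'n^'m)) *v w = t *\<^sub>R (P *v w)"
  by (simp add: vec_eq_iff matrix_vector_mult_def sum_distrib_left algebra_simps)

lemma curve_eq: "P ** Tr w t - m *\<^sub>R mat 1 = (P - m *\<^sub>R mat 1) + t *\<^sub>R outer (P *v w) (w v* J_std)"
  unfolding Tr_def by (simp add: matrix_add_ldistrib matrix_scalar_ac mat_outer scale_mv outer_scale)

lemma curve_Tr: "P ** Tr w t = P + t *\<^sub>R outer (P *v w) (w v* J_std)"
  unfolding Tr_def by (simp add: matrix_add_ldistrib matrix_scalar_ac mat_outer scale_mv outer_scale)

lemma chi_curve: "chi (P ** Tr w t, m) = chi (P, m) + t * gg P m w"
proof -
  have "chi (P ** Tr w t, m) = det (P ** Tr w t - m *\<^sub>R mat 1)" by (simp add: chi_def)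
  also have "\<dots> = det (P - m *\<^sub>R mat 1) + t * gg P m w"
    unfolding curve_eq gg_def outer_def by (rule det_rank_one_affine)
  finally show ?thesis by (simp add: chi_def)
qed

lemma subm:
  assumes P: "P \<in> Sp" and m: "m > 0" and g: "gg P m w \<noteq> 0"
  shows "submersion_at (Sp \<times> {0<..}) chi (P, m)"
  unfolding submersion_at_def
proof (intro conjI)
  show "(P, m) \<in> Sp \<times> {0<..}" using P m by auto
  obtain f' where f': "(chi has_derivative f') (at (P, m))"
    using chi_differentiable unfolding differentiable_def by blast
  have "f' ` tangent_space (Sp \<times> {0<..}) (P, m) = UNIV"
  proof (intro set_eqI iffI)
    fix r :: real
    define s where "s = r / gg P m w"
    define v where "v = (s *\<^sub>R outer (P *v w) (w v* J_std), 0::real)"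
    define \<gamma> where "\<gamma> = (\<lambda>t::real. (P, m) + t *\<^sub>R v)"
    have \<gamma>eq: "\<gamma> t = (P ** Tr w (t * s), m)" for t
      unfolding \<gamma>_def v_def curve_Tr by simp
    have vd: "(\<gamma> has_vector_derivative v) (at 0)"
      unfolding \<gamma>_def has_vector_derivative_def
      by (auto intro!: derivative_eq_intros)
    have "v \<in> tangent_space (Sp \<times> {0<..}) (P, m)"
      unfolding tangent_space_def
    proof (intro CollectI exI conjI allI)
      show "\<gamma> 0 = (P, m)" unfolding \<gamma>_def by simp
      fix t show "\<gamma> t \<in> Sp \<times> {0<..}" unfolding \<gamma>eq using P m Sp_mult Tr_Sp by auto
    qed (rule vd)
    moreover have "f' v = r"
    proof -
      have d1: "((chi \<circ> \<gamma>) has_derivative (f' \<circ> (\<lambda>h. h *\<^sub>R v))) (at 0)"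
        apply (rule diff_chain_at)
        using vd unfolding has_vector_derivative_def apply assumption
        unfolding \<gamma>_def using f' by simp
      have ceq: "chi \<circ> \<gamma> = (\<lambda>t. chi (P, m) + t * r)"
        using g by (auto simp: fun_eq_iff \<gamma>eq chi_curve s_def)
      have d2: "((chi \<circ> \<gamma>) has_derivative (\<lambda>h. h * r)) (at 0)"
        unfolding ceq by (auto intro!: derivative_eq_intros)
      from has_derivative_unique[OF d1 d2] have "f' (1 *\<^sub>R v) = 1 * r"
        by (metis comp_apply)
      then show ?thesis by simp
    qed
    ultimately show "r \<in> f' ` tangent_space (Sp \<times> {0<..}) (P, m)" by blast
  qed auto
  then show "\<exists>f'. (chi has_derivative f') (at (P, m)) \<and> f' ` tangent_space (Sp \<times> {0<..}) (P, m) = UNIV"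
    using f' by blast
qed

lemma cont_mm: "continuous_on S (\<lambda>M::real^'n::finite^'m::finite. M ** (C::real^'p::finite^'n))"
proof -
  have "linear (\<lambda>M::real^'n::finite^'m::finite. M ** C)"
    by (rule linearI) (simp_all add: vec_eq_iff matrix_matrix_mult_def sum_distrib_left sum.distrib algebra_simps)
  then show ?thesis by (simp add: linear_continuous_on linear_conv_bounded_linear)
qed

lemma continuous_on_det: "continuous_on S (det :: real^'n::finite^'n \<Rightarrow> real)"
  by (meson det_differentiable differentiable_imp_continuous_within continuous_at_imp_continuous_on)

lemma gg_alt: "gg P m w = det (P - m *\<^sub>R mat 1 + P ** outer w (w v* J_std)) - det (P - m *\<^sub>R mat 1)"
  unfolding gg_def mat_outer ..

lemma open_gg: "open {z :: 'k::finite mat \<times> real. gg (fst z) (snd z) w \<noteq> 0}"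
proof (rule open_Collect_neq)
  show "continuous_on UNIV (\<lambda>z :: 'k::finite mat \<times> real. gg (fst z) (snd z) w)"
    unfolding gg_alt
    by (intro continuous_intros continuous_on_compose2[OF cont_mm] continuous_on_compose2[OF continuous_on_det]) auto
qed auto

lemma det_zero_if_kernel:
  fixes M :: "real^'n::finite^'n"
  assumes "M *v y = 0" "y \<noteq> 0" shows "det M = 0"
proof -
  have "\<not> inj ((*v) M)"
  proof
    assume "inj ((*v) M)"
    then have "y = 0" using injD[of "(*v) M" y 0] assms(1) by simp
    with assms(2) show False by simp
  qed
  then show ?thesis
    using det_nz_iff_inj[OF matrix_vector_mul_linear[of M]] by (simp add: matrix_of_matrix_vector_mul)
qed

lemma det_nz_if_inj:
  fixes M :: "real^'n::finite^'n"
  assumes "\<And>y. M *v y = 0 \<Longrightarrow> y = 0" shows "det M \<noteq> 0"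
proof -
  have "inj ((*v) M)"
    using linear_inj_on_iff_eq_0[OF matrix_vector_mul_linear[of M], of UNIV] assms by auto
  then show ?thesis
    using det_nz_iff_inj[OF matrix_vector_mul_linear[of M]] by (simp add: matrix_of_matrix_vector_mul)
qed

lemma kernel_subspace: "subspace {x. (M::real^'n::finite^'n) *v x = 0}"
proof -
  have "M *v (c *\<^sub>R x) = c *\<^sub>R (M *v x)" for c x
    by (simp add: vec_eq_iff matrix_vector_mult_def sum_distrib_left algebra_simps)
  then show ?thesis
    unfolding subspace_def by (simp add: matrix_vector_right_distrib)
qed

lemma U_sub:
  assumes g: "gg P m w \<noteq> 0"
  shows "dim_ker P m \<le> 1"
proof (rule ccontr)
  define A where "A = P - m *\<^sub>R mat 1"
  define K where "K = {x. A *v x = 0}"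
  define b where "b = w v* J_std"
  define a where "a = P *v w"
  assume "\<not> dim_ker P m \<le> 1"
  then have dK: "dim K \<ge> 2" unfolding dim_ker_def K_def A_def by simp
  obtain B where B: "B \<subseteq> K" "independent B" "K \<subseteq> span B" "card B = dim K"
    by (rule basis_exists)
  have "card B \<ge> 2" using B dK by simp
  then obtain y1 y2 where y: "y1 \<in> B" "y2 \<in> B" "y1 \<noteq> y2"
    by (metis One_nat_def card_le_Suc_iff numeral_2_eq_2 insert_iff)
  have nz: "y1 \<noteq> 0" "y2 \<noteq> 0" using B(2) y dependent_zero by blast+
  have ns: "y1 \<notin> span {y2}"
  proof
    assume "y1 \<in> span {y2}"
    moreover have "span {y2} \<subseteq> span (B - {y1})" using y by (intro span_mono) auto
    ultimately have "y1 \<in> span (B - {y1})" by blast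
    then show False using B(2) y(1) unfolding dependent_def by blast
  qed
  have inK: "y1 \<in> K" "y2 \<in> K" using B y by auto
  obtain y where yK: "y \<in> K" and yb: "b \<bullet> y = 0" and y0: "y \<noteq> 0"
  proof (cases "b \<bullet> y1 = 0")
    case True then show ?thesis using that inK nz by blast
  next
    case False
    define y where "y = (b \<bullet> y2) *\<^sub>R y1 - (b \<bullet> y1) *\<^sub>R y2"
    have S: "subspace K" unfolding K_def by (rule kernel_subspace)
    have "y \<in> K" unfolding y_def by (intro subspace_diff[OF S] subspace_scale[OF S] inK)
    moreover have "b \<bullet> y = 0" unfolding y_def by (simp add: inner_diff_right algebra_simps)
    moreover have "y \<noteq> 0"
    proof
      assume "y = 0"
      define k where "k = (b \<bullet> y2) / (b \<bullet> y1)"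
      have h: "(b \<bullet> y2) *\<^sub>R y1 = (b \<bullet> y1) *\<^sub>R y2"
        using \<open>y = 0\<close> unfolding y_def by simp
      have "y2 = (1 / (b \<bullet> y1)) *\<^sub>R ((b \<bullet> y1) *\<^sub>R y2)" using False by simp
      also have "\<dots> = (1 / (b \<bullet> y1)) *\<^sub>R ((b \<bullet> y2) *\<^sub>R y1)" using h by simp
      also have "\<dots> = k *\<^sub>R y1" by (simp add: k_def)
      finally have y2k: "y2 = k *\<^sub>R y1" .
      then have "k \<noteq> 0" using nz by auto
      then have "y1 = (1 / k) *\<^sub>R y2" using y2k by simp
      then have "y1 \<in> span {y2}" using span_scale[OF span_base[of y2 "{y2}"]] by simp
      with ns show False by simp
    qed
    ultimately show ?thesis using that by blast
  qed
  have "(A + outer a b) *v y = 0"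
    using yK yb unfolding K_def by (simp add: matrix_vector_mult_add_rdistrib outer_mv)
  then have d1: "det (A + outer a b) = 0" by (rule det_zero_if_kernel[OF _ y0])
  have d2: "det A = 0" using yK y0 unfolding K_def by (auto intro: det_zero_if_kernel)
  have "gg P m w = 0" unfolding gg_def using d1 d2 by (simp add: A_def a_def b_def)
  with g show False by simp
qed

lemma GG1_in:
  assumes P: "P \<in> Sp" and d: "dim_ker P m = 1"
  shows "\<exists>w. gg P m w \<noteq> 0"
proof -
  define A where "A = P - m *\<^sub>R mat 1"
  define K where "K = {x. A *v x = 0}"
  have dK: "dim K = 1" using d unfolding dim_ker_def K_def A_def by simp
  obtain B where B: "B \<subseteq> K" "independent B" "K \<subseteq> span B" "card B = dim K"
    by (rule basis_exists)
  then obtain u where Bu: "B = {u}" using dK by (metis card_1_singletonE)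
  have u0: "u \<noteq> 0" using B(2) Bu dependent_zero by blast
  have uK: "A *v u = 0" using B Bu unfolding K_def by auto
  have Kspan: "\<And>y. A *v y = 0 \<Longrightarrow> \<exists>c. y = c *\<^sub>R u"
    using B(3) Bu unfolding K_def by (auto simp: span_singleton)
  have "\<not> inj ((*v) A)"
  proof
    assume "inj ((*v) A)"
    then have "u = 0" using injD[of "(*v) A" u 0] uK by simp
    with u0 show False by simp
  qed
  then have "\<not> surj ((*v) A)"
    using eucl.linear_surjective_imp_injective matrix_vector_mul_linear by blast
  then obtain z where z: "z \<notin> range ((*v) A)" by blast
  obtain w1 where w1: "P *v w1 = z" using Sp_surj[OF P] by (metis surjD)
  define w2 where "w2 = J_std *v u"
  have Ju: "J_std *v u \<noteq> 0" 
  proof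
    assume "J_std *v u = 0"
    then have "J_std *v (J_std *v u) = 0" by simp
    then show False using u0 J_J[of u] by simp
  qed
  have w2: "omega w2 u \<noteq> 0" unfolding w2_def omega_def using Ju by simp
  have lin: "P *v (x - y) = P *v x - P *v y" for x y by (simp add: matrix_vector_mult_diff_distrib)
  obtain w where wr: "P *v w \<notin> range ((*v) A)" and wo: "omega w u \<noteq> 0"
  proof (cases "omega w1 u = 0")
    case False then show ?thesis using that w1 z by blast
  next
    case True
    show ?thesis
    proof (cases "P *v w2 \<in> range ((*v) A)")
      case False then show ?thesis using that w2 by blast
    next
      case True2: True
      have "P *v (w1 + w2) \<notin> range ((*v) A)"
      proof
        assume "P *v (w1 + w2) \<in> range ((*v) A)"
        then obtain p where p: "P *v (w1 + w2) = A *v p" by blast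
        obtain q where q: "P *v w2 = A *v q" using True2 by blast
        have "z = A *v (p - q)"
          using p q w1 lin[of "w1 + w2" w2] by (simp add: matrix_vector_mult_diff_distrib)
        with z show False by blast
      qed
      moreover have "omega (w1 + w2) u \<noteq> 0" using True w2 by (simp add: omega_add_left)
      ultimately show ?thesis using that by blast
    qed
  qed
  define a where "a = P *v w"
  define b where "b = w v* J_std"
  have bu: "b \<bullet> u \<noteq> 0" unfolding b_def dot_lmul_matrix using wo by (simp add: omega_def)
  have "det (A + outer a b) \<noteq> 0"
  proof (rule det_nz_if_inj)
    fix y assume "(A + outer a b) *v y = 0"
    then have Ay: "A *v y + (b \<bullet> y) *\<^sub>R a = 0" by (simp add: matrix_vector_mult_add_rdistrib outer_mv)
    have by0: "b \<bullet> y = 0"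
    proof (rule ccontr)
      assume ne: "b \<bullet> y \<noteq> 0"
      have "A *v ((- 1 / (b \<bullet> y)) *\<^sub>R y) = (- 1 / (b \<bullet> y)) *\<^sub>R (A *v y)"
        unfolding vec_eq_iff matrix_vector_mult_def by (simp add: sum_distrib_left mult.assoc mult.left_commute sum_negf sum_divide_distrib)
      also have "\<dots> = a" using Ay ne
        by (simp add: eq_neg_iff_add_eq_0[symmetric] field_simps)
      finally have "a \<in> range ((*v) A)" by (metis rangeI)
      then show False using wr unfolding a_def by simp
    qed
    then have "A *v y = 0" using Ay by simp
    then obtain c where c: "y = c *\<^sub>R u" using Kspan by blast
    then have "c * (b \<bullet> u) = 0" using by0 by simp
    then show "y = 0" using bu c by simp
  qed
  moreover have "det A = 0" using uK u0 by (rule det_zero_if_kernel)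
  ultimately have "gg P m w \<noteq> 0" unfolding gg_def by (simp add: A_def a_def b_def)
  then show ?thesis by blast
qed

theorem propositionA4:
  shows "\<exists>U :: ('k::finite mat \<times> real) set.
           openin (top_of_set (Sp \<times> {0<..})) U \<and> GG1 \<subseteq> U \<and> U \<subseteq> GG \<and>
           (\<forall>x\<in>U. submersion_at (Sp \<times> {0<..}) chi x)"
proof (intro exI conjI)
  define V where "V = (\<Union>w. {z :: 'k::finite mat \<times> real. gg (fst z) (snd z) w \<noteq> 0})"
  let ?U = "(Sp \<times> {0<..}) \<inter> V"
  show "openin (top_of_set (Sp \<times> {0<..})) ?U"
    by (rule openin_open_Int) (auto simp: V_def intro!: open_UN open_gg)
  show "GG1 \<subseteq> ?U"
    using GG1_in unfolding GG1_def V_def by fastforce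
  show "?U \<subseteq> GG"
    using U_sub unfolding GG_def V_def by fastforce
  show "\<forall>x\<in>?U. submersion_at (Sp \<times> {0<..}) chi x"
    using subm unfolding V_def by fastforce
qed

end
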